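(* For all integers $n>1$ and $k>n$ we have $3F(n,k)\le2F(n,k+1)$, with equality if and only if $n=2$ and $k=4$.
   Context: For positive integers $n,k$, the generalized Fibonacci numbers are defined by $F(n,k)=0$ if $1\le k<n$, $F(n,k)=1$ if $k=n$, and $F(n,k)=\sum_{j=1}^nF(n,k-j)$ if $k>n$. *)

theory Defs
  imports Main
begin

text \<open>Generalized Fibonacci numbers F(n,k). The paper defines them for positive n, k;
  the value at k = 0 is an irrelevant artefact of totality.\<close>
function genfib :: "nat \<Rightarrow> nat \<Rightarrow> nat" where
  "genfib n k = (if k < n then 0 else if k = n then 1
                 else (\<Sum>j=1..n. genfib n (k - j)))"
  by auto
termination
  by (relation "measure (\<lambda>(n,k). k)") auto

end

theory Submission
  imports Defs
begin

declare genfib.simps[simp del]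

lemma g_lt: "k < n \<Longrightarrow> genfib n k = 0"
  by (subst genfib.simps) simp

lemma g_eq: "genfib n n = 1"
  by (subst genfib.simps) simp

lemma g_gt: "k > n \<Longrightarrow> genfib n k = (\<Sum>j=1..n. genfib n (k - j))"
  by (subst genfib.simps) simp

lemma g_step: assumes "n \<ge> 1" shows "genfib n m \<le> genfib n (Suc m)"
proof (cases "m < n")
  case True then show ?thesis by (simp add: g_lt)
next
  case False
  then have "n \<ge> 1 \<or> n = 0" by auto
  show ?thesis
  proof (cases "n = 0")
    case True
    then show ?thesis using assms by simp
  next
    case nz: False
    have "genfib n (Suc m) = (\<Sum>j=1..n. genfib n (Suc m - j))" using False by (simp add: g_gt)
    also have "\<dots> \<ge> genfib n (Suc m - 1)"
      by (rule member_le_sum) (use nz in auto)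
    finally show ?thesis by simp
  qed
qed

lemma g_mono: "i \<le> j \<Longrightarrow> n \<ge> 1 \<Longrightarrow> genfib n i \<le> genfib n j"
  by (rule lift_Suc_mono_le[of "genfib n"]) (auto simp: g_step)

lemma g_two: assumes "m > n" "n \<ge> 2"
  shows "genfib n (m - 1) + genfib n (m - 2) \<le> genfib n m"
proof -
  have "genfib n (m - 1) + genfib n (m - 2) = (\<Sum>j\<in>{1,2::nat}. genfib n (m - j))" by simp
  also have "\<dots> \<le> (\<Sum>j=1..n. genfib n (m - j))"
    by (rule sum_mono2) (use assms in auto)
  finally show ?thesis using assms by (simp add: g_gt)
qed

lemma g_rec: assumes "k > n" "n \<ge> 1"
  shows "genfib n (k + 1) + genfib n (k - n) = 2 * genfib n k"
proof -
  obtain p where p: "n = Suc p" using assms by (cases n) auto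
  have a: "genfib n (k+1) = genfib n k + (\<Sum>j=Suc 1..Suc p. genfib n (k + 1 - j))"
    using assms p by (simp add: g_gt sum.atLeast_Suc_atMost)
  have b: "(\<Sum>j=Suc 1..Suc p. genfib n (k + 1 - j)) = (\<Sum>j=1..p. genfib n (k - j))"
    by (simp only: sum.shift_bounds_cl_Suc_ivl) simp
  have c: "genfib n k = (\<Sum>j=1..p. genfib n (k - j)) + genfib n (k - n)"
    using assms p by (simp add: g_gt)
  show ?thesis using a b c by simp
qed

lemma key: assumes "n > 1" "k > n"
  shows "2 * genfib n (k - n) \<le> genfib n k \<and>
     (2 * genfib n (k - n) = genfib n k \<longleftrightarrow> n = 2 \<and> k = 4)"
proof -
  have g1: "genfib n n = 1" by (rule g_eq)
  have n1: "genfib n (n+1) \<ge> 1" using g_mono[of n "n+1" n] g1 assms by simp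
  have n2: "genfib n (n+2) \<ge> 2" using g_two[of n "n+2"] assms n1 g1 by simp
  have strict: "genfib n m < genfib n (m+1)" if "m \<ge> n + 1" for m
  proof -
    have "genfib n m + genfib n (m - 1) \<le> genfib n (m+1)" using g_two[of n "m+1"] assms that by simp
    moreover have "genfib n (m - 1) \<ge> 1" using g_mono[of n "m-1" n] g1 that assms by simp
    ultimately show ?thesis by simp
  qed
  consider "k < 2*n" | "k = 2*n" | "k > 2*n" by linarith
  then show ?thesis
  proof cases
    case 1
    then have "genfib n (k - n) = 0" using assms by (intro g_lt) simp
    moreover have "genfib n k \<ge> 1" using g_mono[of n k n] g1 assms by simp
    ultimately show ?thesis using 1 by auto
  next
    case 2
    then have e: "genfib n (k - n) = 1" using g1 by simp
    show ?thesis
    proof (cases "n = 2")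
      case True
      have "genfib 2 4 = 2"
        using g_gt[of 2 4] g_eq[of 2] g_gt[of 2 3] g_lt[of 1 2]
        by (simp add: numeral_eq_Suc)
      then show ?thesis using True 2 e by simp
    next
      case False
      then have "n \<ge> 3" using assms by simp
      then have "genfib n (n+2) < genfib n (n+2+1)" using strict[of "n+2"] by simp
      then have "genfib n (n+2) < genfib n (n+3)" by (simp add: numeral_3_eq_3)
      moreover have "genfib n (n+3) \<le> genfib n k" using g_mono[of "n+3" k n] 2 \<open>n \<ge> 3\<close> by simp
      ultimately show ?thesis using n2 e False by simp
    qed
  next
    case 3
    have t: "genfib n (k - 1) + genfib n (k - 2) \<le> genfib n k" using g_two assms by simp
    have s: "genfib n (k - 2) < genfib n (k - 1)" using strict[of "k-2"] 3 assms
      by (simp add: Suc_diff_Suc numeral_2_eq_2)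
    have m: "genfib n (k - n) \<le> genfib n (k - 2)" using g_mono assms by simp
    show ?thesis using t s m 3 assms by auto
  qed
qed

theorem mainTheorem16:
  fixes n k :: nat
  assumes "n > 1" and "k > n"
  shows "3 * genfib n k \<le> 2 * genfib n (k + 1)
         \<and> (3 * genfib n k = 2 * genfib n (k + 1) \<longleftrightarrow> n = 2 \<and> k = 4)"
  using key[OF assms] g_rec[of n k] assms by auto

end
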